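(* Let $n=p+q$, let $h^1,\dots,h^n:\mathbb{R}^{p,q}\to\mathcal{C}\ell_{\circledS}(p,q)$ be a smooth Clifford field vector, $h_\rho=\eta_{\rho\mu}h^\mu$, and let $C_1,\dots,C_n:\mathbb{R}^{p,q}\to\mathcal{C}\ell_{\circledS}(p,q)$ be smooth functions satisfying $$\partial_\mu h_\rho-[C_\mu,h_\rho]=0\quad\text{for all }\mu,\rho=1,\dots,n.$$ Let $S:\mathbb{R}^{p,q}\to\mathcal{C}\ell(p,q)$ be a smooth function with values in invertible elements such that $S^{-1}\partial_\mu S\in\mathcal{C}\ell_{\circledS}(p,q)$ for all $\mu$ and all $x$. Put $\acute h_\rho=S^{-1}h_\rho S$ and $\acute C_\mu=S^{-1}C_\mu S-S^{-1}\partial_\mu S$. Then $\acute h_\rho,\acute C_\mu$ take values in $\mathcal{C}\ell_{\circledS}(p,q)$ and $$\partial_\mu \acute h_\rho-[\acute C_\mu,\acute h_\rho]=0\quad\text{for all }\mu,\rho=1,\dots,n.$$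
   Context: $\mathbb{R}^{p,q}$ is $\mathbb{R}^n$ with Cartesian coordinates $x^1,\dots,x^n$, $\partial_\mu=\partial/\partial x^\mu$, and metric $\eta=(\eta_{\mu\nu})=(\eta^{\mu\nu})=\mathrm{diag}(1,\dots,1,-1,\dots,-1)$ ($p$ ones, $q$ minus ones); Einstein summation is used. $\mathcal{C}\ell(p,q)$ is the complex Clifford algebra with identity $e$ and generators $e^1,\dots,e^n$, $e^ae^b+e^be^a=2\eta^{ab}e$, with basis $e$, $e^{a_1\dots a_k}=e^{a_1}\cdots e^{a_k}$ ($a_1<\dots<a_k$); functions into it are differentiated coefficientwise in this fixed basis. $[U,V]=UV-VU$. $\pi_k$ is the projection onto the span of the basis elements with $k$ indices, $\mathrm{Tr}(U)$ the coefficient of $e$. The center is $\mathcal{C}\ell_0$ for even $n$ and $\mathcal{C}\ell_0\oplus\mathcal{C}\ell_n$ for odd $n$; $\mathcal{C}\ell_{\circledS}(p,q)$ is the set of elements with zero projection onto the center. A Clifford field vector is a collection $h^\mu:\mathbb{R}^{p,q}\to\mathcal{C}\ell(p,q)$, $\mu=1,\dots,n$, with $h^\mu h^\nu+h^\nu h^\mu=2\eta^{\mu\nu}e$ and $\mathrm{Tr}(h^1\cdots h^n)=0$ at every point. *)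

theory Defs
  imports "HOL-Analysis.Analysis"
begin

text \<open>
The index set {1,...,n} of generators e^1,...,e^n (and of the Cartesian
coordinates x^1,...,x^n) is modelled by a finite linearly ordered type 'n with n = CARD('n);
the k-th element of 'n in the order corresponds to index k.  The first p indices have
eta = 1, the remaining q = n - p have eta = -1.
An element of the complex Clifford algebra Cl(p,q) is its coefficient family with respect
to the basis e^A (A a subset of the generators, e^{} = e), i.e. a map 'n set => complex.
\<close>

type_synonym 'n cl = "'n set \<Rightarrow> complex"

definition idx :: "'n::{finite,linorder} \<Rightarrow> nat" where
  "idx a = card {b. b < a} + 1"

definition eta :: "nat \<Rightarrow> 'n::{finite,linorder} \<Rightarrow> complex" where
  "eta p a = (if idx a \<le> p then 1 else -1)"

text \<open>sign of e^A e^B = sign * e^{A symdiff B}\<close>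
definition blade_sign :: "nat \<Rightarrow> 'n::{finite,linorder} set \<Rightarrow> 'n set \<Rightarrow> complex" where
  "blade_sign p A B =
     (-1) ^ card {(a, b). a \<in> A \<and> b \<in> B \<and> b < a} * (\<Prod>a\<in>A \<inter> B. eta p a)"

definition cl_mul :: "nat \<Rightarrow> 'n::{finite,linorder} cl \<Rightarrow> 'n cl \<Rightarrow> 'n cl" where
  "cl_mul p U V = (\<lambda>C. \<Sum>A\<in>UNIV. \<Sum>B\<in>UNIV.
      if (A - B) \<union> (B - A) = C then blade_sign p A B * U A * V B else 0)"

definition cl_zero :: "'n cl" where
  "cl_zero = (\<lambda>A. 0)"

definition cl_add :: "'n cl \<Rightarrow> 'n cl \<Rightarrow> 'n cl" where
  "cl_add U V = (\<lambda>A. U A + V A)"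

definition cl_sub :: "'n cl \<Rightarrow> 'n cl \<Rightarrow> 'n cl" where
  "cl_sub U V = (\<lambda>A. U A - V A)"

definition cl_one :: "'n cl" where
  "cl_one = (\<lambda>A. if A = {} then 1 else 0)"

definition cl_scale :: "complex \<Rightarrow> 'n cl \<Rightarrow> 'n cl" where
  "cl_scale c U = (\<lambda>A. c * U A)"

definition cl_comm :: "nat \<Rightarrow> 'n::{finite,linorder} cl \<Rightarrow> 'n cl \<Rightarrow> 'n cl" where
  "cl_comm p U V = cl_sub (cl_mul p U V) (cl_mul p V U)"

definition cl_invertible :: "nat \<Rightarrow> 'n::{finite,linorder} cl \<Rightarrow> bool" where
  "cl_invertible p U \<longleftrightarrow> (\<exists>V. cl_mul p U V = cl_one \<and> cl_mul p V U = cl_one)"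

definition cl_inv :: "nat \<Rightarrow> 'n::{finite,linorder} cl \<Rightarrow> 'n cl" where
  "cl_inv p U = (SOME V. cl_mul p U V = cl_one \<and> cl_mul p V U = cl_one)"

definition cl_tr :: "'n cl \<Rightarrow> complex" where
  "cl_tr U = U {}"

definition cl_prod_list :: "nat \<Rightarrow> 'n::{finite,linorder} cl list \<Rightarrow> 'n cl" where
  "cl_prod_list p Us = foldr (cl_mul p) Us cl_one"

text \<open>Cl_circledS(p,q): zero projection onto the center (Cl_0 for even n, Cl_0 + Cl_n for odd n)\<close>
definition cl_circS :: "'n::{finite,linorder} cl set" where
  "cl_circS = {U. U {} = 0 \<and> (odd CARD('n) \<longrightarrow> U UNIV = 0)}"

definition partial :: "'n \<Rightarrow> ((real, 'n::{finite,linorder}) vec \<Rightarrow> complex) \<Rightarrow> (real, 'n) vec \<Rightarrow> complex" where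
  "partial i f x = vector_derivative (\<lambda>t. f (x + t *\<^sub>R axis i 1)) (at 0)"

fun iter_partial :: "('n::{finite,linorder}) list \<Rightarrow> ((real, 'n) vec \<Rightarrow> complex) \<Rightarrow> (real, 'n) vec \<Rightarrow> complex" where
  "iter_partial [] f = f"
| "iter_partial (i # is) f = partial i (iter_partial is f)"

definition smooth_fun :: "((real, 'n::{finite,linorder}) vec \<Rightarrow> complex) \<Rightarrow> bool" where
  "smooth_fun f \<longleftrightarrow> (\<forall>is. continuous_on UNIV (iter_partial is f) \<and>
      (\<forall>i x. (\<lambda>t. iter_partial is f (x + t *\<^sub>R axis i 1)) differentiable (at 0)))"

definition cl_smooth :: "((real, 'n::{finite,linorder}) vec \<Rightarrow> 'n cl) \<Rightarrow> bool" where
  "cl_smooth F \<longleftrightarrow> (\<forall>A. smooth_fun (\<lambda>x. F x A))"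

definition cl_partial :: "'n::{finite,linorder} \<Rightarrow> ((real, 'n) vec \<Rightarrow> 'n cl) \<Rightarrow> (real, 'n) vec \<Rightarrow> 'n cl" where
  "cl_partial i F x = (\<lambda>A. partial i (\<lambda>y. F y A) x)"

definition clifford_field_vector :: "nat \<Rightarrow> ('n::{finite,linorder} \<Rightarrow> (real, 'n) vec \<Rightarrow> 'n cl) \<Rightarrow> bool" where
  "clifford_field_vector p h \<longleftrightarrow> (\<forall>x.
      (\<forall>\<mu> \<nu>. cl_add (cl_mul p (h \<mu> x) (h \<nu> x)) (cl_mul p (h \<nu> x) (h \<mu> x))
              = cl_scale (2 * (if \<mu> = \<nu> then eta p \<mu> else 0)) cl_one) \<and>
      cl_tr (cl_prod_list p (map (\<lambda>\<mu>. h \<mu> x) (sorted_list_of_set UNIV))) = 0)"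

definition lower :: "nat \<Rightarrow> ('n::{finite,linorder} \<Rightarrow> (real, 'n) vec \<Rightarrow> 'n cl) \<Rightarrow> 'n \<Rightarrow> (real, 'n) vec \<Rightarrow> 'n cl" where
  "lower p h \<rho> x = cl_scale (eta p \<rho>) (h \<rho> x)"

end

theory Submission
  imports Defs
begin


definition sd :: "'a set \<Rightarrow> 'a set \<Rightarrow> 'a set" where
  "sd A B = (A - B) \<union> (B - A)"

lemma sd_iff: "sd A B = C \<longleftrightarrow> B = sd A C"
  unfolding sd_def by blast

lemma sd_sd[simp]: "sd A (sd A B) = B"
  unfolding sd_def by blast

lemma cl_mul_alt:
  "cl_mul p U V C = (\<Sum>A\<in>UNIV. blade_sign p A (sd A C) * U A * V (sd A C))"
  unfolding cl_mul_def
proof (rule sum.cong[OF refl])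
  fix A :: "'a set"
  have "\<And>B. ((A - B) \<union> (B - A) = C) = (B = sd A C)" using sd_iff unfolding sd_def by blast
  then show "(\<Sum>B\<in>UNIV. if (A - B) \<union> (B - A) = C then blade_sign p A B * U A * V B else 0) =
    blade_sign p A (sd A C) * U A * V (sd A C)"
    by (simp add: sum.delta')
qed

definition ninv :: "'n::{finite,linorder} set \<Rightarrow> 'n set \<Rightarrow> nat" where
  "ninv X Y = card {(a, b). a \<in> X \<and> b \<in> Y \<and> b < a}"

definition ep :: "nat \<Rightarrow> 'n::{finite,linorder} set \<Rightarrow> complex" where
  "ep p X = (\<Prod>a\<in>X. eta p a)"

lemma blade_sign_alt: "blade_sign p A B = (-1) ^ ninv A B * ep p (A \<inter> B)"
  unfolding blade_sign_def ninv_def ep_def by simp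

lemma inv_union_left:
  assumes "X \<inter> Y = {}"
  shows "ninv (X \<union> Y) F = ninv X F + ninv Y F"
proof -
  have "{(a, b). a \<in> X \<union> Y \<and> b \<in> F \<and> b < a} =
        {(a, b). a \<in> X \<and> b \<in> F \<and> b < a} \<union> {(a, b). a \<in> Y \<and> b \<in> F \<and> b < a}" by auto
  moreover have "{(a, b). a \<in> X \<and> b \<in> F \<and> b < a} \<inter> {(a, b). a \<in> Y \<and> b \<in> F \<and> b < a} = {}"
    using assms by auto
  ultimately show ?thesis unfolding ninv_def
    by (simp add: card_Un_disjoint)
qed

lemma inv_union_right:
  assumes "X \<inter> Y = {}"
  shows "ninv F (X \<union> Y) = ninv F X + ninv F Y"
proof -
  have "{(a, b). a \<in> F \<and> b \<in> X \<union> Y \<and> b < a} =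
        {(a, b). a \<in> F \<and> b \<in> X \<and> b < a} \<union> {(a, b). a \<in> F \<and> b \<in> Y \<and> b < a}" by auto
  moreover have "{(a, b). a \<in> F \<and> b \<in> X \<and> b < a} \<inter> {(a, b). a \<in> F \<and> b \<in> Y \<and> b < a} = {}"
    using assms by auto
  ultimately show ?thesis unfolding ninv_def
    by (simp add: card_Un_disjoint)
qed

lemma inv_sd_left: "ninv A F + ninv B F = ninv (sd A B) F + 2 * ninv (A \<inter> B) F"
proof -
  have a: "A = (A - B) \<union> (A \<inter> B)" and b: "B = (B - A) \<union> (A \<inter> B)" by auto
  have "ninv A F = ninv (A - B) F + ninv (A \<inter> B) F"
    by (subst a, subst inv_union_left) auto
  moreover have "ninv B F = ninv (B - A) F + ninv (A \<inter> B) F"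
    by (subst b, subst inv_union_left) auto
  moreover have "ninv (sd A B) F = ninv (A - B) F + ninv (B - A) F"
    unfolding sd_def by (subst inv_union_left) auto
  ultimately show ?thesis by simp
qed

lemma inv_sd_right: "ninv F A + ninv F B = ninv F (sd A B) + 2 * ninv F (A \<inter> B)"
proof -
  have a: "A = (A - B) \<union> (A \<inter> B)" and b: "B = (B - A) \<union> (A \<inter> B)" by auto
  have "ninv F A = ninv F (A - B) + ninv F (A \<inter> B)"
    by (subst a, subst inv_union_right) auto
  moreover have "ninv F B = ninv F (B - A) + ninv F (A \<inter> B)"
    by (subst b, subst inv_union_right) auto
  moreover have "ninv F (sd A B) = ninv F (A - B) + ninv F (B - A)"
    unfolding sd_def by (subst inv_union_right) auto
  ultimately show ?thesis by simp
qed

lemma m1_pow_add2: "(-1::complex) ^ (x + 2 * y) = (-1) ^ x"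
  by (simp add: power_add power_mult)

lemma ep_union: "X \<inter> Y = {} \<Longrightarrow> ep p (X \<union> Y) = ep p X * ep p Y"
  unfolding ep_def by (simp add: prod.union_disjoint)

lemma sign_assoc:
  "blade_sign p (sd A B) F * blade_sign p A B = blade_sign p A (sd B F) * blade_sign p B F"
proof -
  have i1: "(-1::complex) ^ ninv (sd A B) F = (-1) ^ ninv A F * (-1) ^ ninv B F"
    by (metis inv_sd_left m1_pow_add2 power_add)
  have i2: "(-1::complex) ^ ninv A (sd B F) = (-1) ^ ninv A B * (-1) ^ ninv A F"
    by (metis inv_sd_right m1_pow_add2 power_add)
  have e1: "ep p (sd A B \<inter> F) * ep p (A \<inter> B) = ep p ((sd A B \<inter> F) \<union> (A \<inter> B))"
    by (subst ep_union) (auto simp: sd_def)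
  have e2: "ep p (A \<inter> sd B F) * ep p (B \<inter> F) = ep p ((A \<inter> sd B F) \<union> (B \<inter> F))"
    by (subst ep_union) (auto simp: sd_def)
  have e3: "(sd A B \<inter> F) \<union> (A \<inter> B) = (A \<inter> sd B F) \<union> (B \<inter> F)"
    by (auto simp: sd_def)
  show ?thesis unfolding blade_sign_alt i1 i2
    using e1 e2 e3 by (simp add: algebra_simps)
qed

lemma sum_sd_reindex: "(\<Sum>E\<in>UNIV. g E) = (\<Sum>B\<in>UNIV. g (sd A B))"
  by (rule sum.reindex_bij_witness[where i="sd A" and j="sd A"]) auto

lemma cl_mul_assoc: "cl_mul p (cl_mul p U V) W = cl_mul p U (cl_mul p V W)"
proof
  fix D
  have "cl_mul p (cl_mul p U V) W D =
     (\<Sum>E\<in>UNIV. \<Sum>A\<in>UNIV. blade_sign p E (sd E D) * (blade_sign p A (sd A E) * U A * V (sd A E)) * W (sd E D))"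
    by (simp add: cl_mul_alt sum_distrib_left sum_distrib_right)
  also have "\<dots> = (\<Sum>A\<in>UNIV. \<Sum>E\<in>UNIV. blade_sign p E (sd E D) * (blade_sign p A (sd A E) * U A * V (sd A E)) * W (sd E D))"
    by (rule sum.swap)
  also have "\<dots> = (\<Sum>A\<in>UNIV. \<Sum>B\<in>UNIV. blade_sign p (sd A B) (sd (sd A B) D) * (blade_sign p A B * U A * V B) * W (sd (sd A B) D))"
  proof (rule sum.cong[OF refl])
    fix A
    show "(\<Sum>E\<in>UNIV. blade_sign p E (sd E D) * (blade_sign p A (sd A E) * U A * V (sd A E)) * W (sd E D)) =
      (\<Sum>B\<in>UNIV. blade_sign p (sd A B) (sd (sd A B) D) * (blade_sign p A B * U A * V B) * W (sd (sd A B) D))"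
      by (subst sum_sd_reindex[where A=A]) simp
  qed
  also have "\<dots> = (\<Sum>A\<in>UNIV. \<Sum>B\<in>UNIV. blade_sign p A (sd A D) * U A * (blade_sign p B (sd B (sd A D)) * V B * W (sd B (sd A D))))"
  proof (intro sum.cong refl)
    fix A B
    have f: "sd (sd A B) D = sd B (sd A D)" by (auto simp: sd_def)
    have g: "sd B (sd B (sd A D)) = sd A D" by simp
    show "blade_sign p (sd A B) (sd (sd A B) D) * (blade_sign p A B * U A * V B) * W (sd (sd A B) D) =
      blade_sign p A (sd A D) * U A * (blade_sign p B (sd B (sd A D)) * V B * W (sd B (sd A D)))"
      using sign_assoc[of p A B "sd B (sd A D)"] unfolding f g
      by (simp add: algebra_simps)
  qed
  also have "\<dots> = cl_mul p U (cl_mul p V W) D"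
    by (simp add: cl_mul_alt sum_distrib_left)
  finally show "cl_mul p (cl_mul p U V) W D = cl_mul p U (cl_mul p V W) D" .
qed

lemma blade_sign_empty_left[simp]: "blade_sign p {} B = 1"
  by (simp add: blade_sign_def)
lemma blade_sign_empty_right[simp]: "blade_sign p A {} = 1"
  by (simp add: blade_sign_def)

lemma sd_empty_left[simp]: "sd {} C = C" by (simp add: sd_def)
lemma sd_empty_right[simp]: "sd A {} = A" by (simp add: sd_def)
lemma sd_self[simp]: "sd A A = {}" by (simp add: sd_def)
lemma sd_eq_empty[simp]: "sd A C = {} \<longleftrightarrow> A = C" by (auto simp: sd_def)

lemma cl_one_mul[simp]: "cl_mul p cl_one U = U"
proof
  fix C show "cl_mul p cl_one U C = U C"
    by (simp add: cl_mul_alt cl_one_def if_distrib if_distribR sum.delta cong: if_cong)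
qed

lemma cl_mul_one[simp]: "cl_mul p U cl_one = U"
proof
  fix C
  have "\<And>A. blade_sign p A (sd A C) * U A * cl_one (sd A C) = (if A = C then blade_sign p A (sd A C) * U A else 0)"
    by (simp add: cl_one_def)
  then have "cl_mul p U cl_one C = (\<Sum>A\<in>UNIV. if A = C then blade_sign p A (sd A C) * U A else 0)"
    unfolding cl_mul_alt by presburger
  then show "cl_mul p U cl_one C = U C" by (simp add: sum.delta')
qed

lemma cl_mul_add_left: "cl_mul p (cl_add U V) W = cl_add (cl_mul p U W) (cl_mul p V W)"
  by (rule ext) (simp add: cl_mul_alt cl_add_def algebra_simps sum.distrib)
lemma cl_mul_add_right: "cl_mul p W (cl_add U V) = cl_add (cl_mul p W U) (cl_mul p W V)"
  by (rule ext) (simp add: cl_mul_alt cl_add_def algebra_simps sum.distrib)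
lemma cl_mul_sub_left: "cl_mul p (cl_sub U V) W = cl_sub (cl_mul p U W) (cl_mul p V W)"
  by (rule ext) (simp add: cl_mul_alt cl_sub_def algebra_simps sum_subtractf)
lemma cl_mul_sub_right: "cl_mul p W (cl_sub U V) = cl_sub (cl_mul p W U) (cl_mul p W V)"
  by (rule ext) (simp add: cl_mul_alt cl_sub_def algebra_simps sum_subtractf)
lemma cl_mul_scale_left: "cl_mul p (cl_scale c U) W = cl_scale c (cl_mul p U W)"
  by (rule ext) (simp add: cl_mul_alt cl_scale_def algebra_simps sum_distrib_left)
lemma cl_mul_scale_right: "cl_mul p W (cl_scale c U) = cl_scale c (cl_mul p W U)"
  by (rule ext) (simp add: cl_mul_alt cl_scale_def algebra_simps sum_distrib_left)

lemma tr_comm: "cl_mul p U V {} = cl_mul p V U {}"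
  by (simp add: cl_mul_alt algebra_simps)

lemma inv_compl:
  "ninv A (- A) + ninv (- A) A = card A * card (- A)"
proof -
  let ?X = "{(a, b). a \<in> A \<and> b \<in> - A \<and> b < a}"
  let ?Y = "{(a, b). a \<in> - A \<and> b \<in> A \<and> b < a}"
  let ?Y' = "{(a, b). a \<in> A \<and> b \<in> - A \<and> a < b}"
  have im: "?Y' = (\<lambda>(a,b). (b,a)) ` ?Y" by force
  have "inj_on (\<lambda>(a::'a,b::'a). (b,a)) ?Y" by (auto simp: inj_on_def)
  then have "card ?Y = card ?Y'" unfolding im by (simp add: card_image)
  moreover have "?X \<union> ?Y' = A \<times> (- A)" using less_linear by fastforce
  moreover have "?X \<inter> ?Y' = {}" by auto
  ultimately have "card ?X + card ?Y = card (A \<times> (- A))"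
    using card_Un_disjoint[of ?X ?Y'] by simp
  then show ?thesis unfolding ninv_def by (simp add: card_cartesian_product)
qed

lemma sign_compl:
  assumes "odd CARD('n::{finite,linorder})"
  shows "blade_sign p (A::'n set) (- A) = blade_sign p (- A) A"
proof -
  have "card A + card (- A) = CARD('n)"
    using card_Un_disjoint[of A "-A"] by (simp add: Un_commute)
  then have "even (card A * card (- A))" using assms by (metis even_add even_mult_iff)
  then have "even (ninv A (- A) + ninv (- A) A)" by (simp add: inv_compl)
  then have "(-1::complex) ^ ninv A (- A) = (-1) ^ ninv (- A) A"
    by (metis (no_types, lifting) even_add neg_one_even_power neg_one_odd_power)
  then show ?thesis by (simp add: blade_sign_alt Int_commute)
qed

lemma sd_UNIV: "sd A UNIV = - A" by (auto simp: sd_def)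

lemma top_comm:
  assumes "odd CARD('n::{finite,linorder})"
  shows "cl_mul p (U::'n cl) V UNIV = cl_mul p V U UNIV"
proof -
  have "cl_mul p U V UNIV = (\<Sum>A\<in>UNIV. blade_sign p A (- A) * U A * V (- A))"
    by (simp add: cl_mul_alt sd_UNIV)
  also have "\<dots> = (\<Sum>A\<in>UNIV. blade_sign p (- A) A * U A * V (- A))"
    using sign_compl[OF assms] by simp
  also have "\<dots> = (\<Sum>A\<in>UNIV. blade_sign p A (- A) * U (- A) * V A)"
    by (rule sum.reindex_bij_witness[where i=uminus and j=uminus]) auto
  also have "\<dots> = cl_mul p V U UNIV"
    by (simp add: cl_mul_alt sd_UNIV algebra_simps)
  finally show ?thesis .
qed

lemma circS_conj:
  assumes "cl_mul p S T = cl_one" "U \<in> cl_circS"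
  shows "cl_mul p (cl_mul p T U) S \<in> cl_circS"
proof -
  have "cl_mul p (cl_mul p T U) S {} = U {}"
    using tr_comm[of p "cl_mul p T U" S] by (simp add: cl_mul_assoc[symmetric] assms(1))
  moreover have "odd CARD('a) \<Longrightarrow> cl_mul p (cl_mul p T U) S UNIV = U UNIV"
    using top_comm[of p "cl_mul p T U" S] by (simp add: cl_mul_assoc[symmetric] assms(1))
  ultimately show ?thesis using assms(2) by (simp add: cl_circS_def)
qed

lemma circS_sub: "U \<in> cl_circS \<Longrightarrow> V \<in> cl_circS \<Longrightarrow> cl_sub U V \<in> cl_circS"
  by (simp add: cl_circS_def cl_sub_def)
lemma circS_scale: "U \<in> cl_circS \<Longrightarrow> cl_scale c U \<in> cl_circS"
  by (simp add: cl_circS_def cl_scale_def)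



definition nrm :: "'n::{finite,linorder} cl \<Rightarrow> real" where
  "nrm U = (\<Sum>A\<in>UNIV. cmod (U A))"

lemma nrm_nonneg: "0 \<le> nrm U"
  unfolding nrm_def by (simp add: sum_nonneg)

lemma coef_le_nrm: "cmod (U A) \<le> nrm U"
  unfolding nrm_def by (rule member_le_sum) auto

lemma cmod_blade_sign[simp]: "cmod (blade_sign p A B) = 1"
proof -
  have e: "\<And>a. cmod (eta p a) = 1" by (simp add: eta_def)
  have "cmod (ep p X) = 1" for X
    unfolding ep_def prod_norm[symmetric] e by simp
  then show ?thesis by (simp add: blade_sign_alt norm_mult norm_power)
qed

lemma nrm_mul: "nrm (cl_mul p U V) \<le> nrm U * nrm V"
proof -
  have "nrm (cl_mul p U V) \<le> (\<Sum>C\<in>UNIV. \<Sum>A\<in>UNIV. cmod (U A) * cmod (V (sd A C)))"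
    unfolding nrm_def cl_mul_alt
  proof (rule sum_mono)
    fix C
    show "cmod (\<Sum>A\<in>UNIV. blade_sign p A (sd A C) * U A * V (sd A C)) \<le> (\<Sum>A\<in>UNIV. cmod (U A) * cmod (V (sd A C)))"
      by (rule order_trans[OF norm_sum]) (simp add: norm_mult)
  qed
  also have "\<dots> = (\<Sum>A\<in>UNIV. cmod (U A) * (\<Sum>C\<in>UNIV. cmod (V (sd A C))))"
    by (subst sum.swap) (simp add: sum_distrib_left)
  also have "\<dots> = (\<Sum>A\<in>UNIV. cmod (U A) * nrm V)"
  proof (rule sum.cong[OF refl])
    fix A
    have "(\<Sum>C\<in>UNIV. cmod (V (sd A C))) = nrm V"
      unfolding nrm_def by (rule sum_sd_reindex[symmetric])
    then show "cmod (U A) * (\<Sum>C\<in>UNIV. cmod (V (sd A C))) = cmod (U A) * nrm V" by simp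
  qed
  also have "\<dots> = nrm U * nrm V" by (simp add: nrm_def sum_distrib_right)
  finally show ?thesis .
qed

lemma nrm_sub: "nrm (cl_sub U V) \<le> nrm U + nrm V"
  unfolding nrm_def cl_sub_def sum.distrib[symmetric]
  by (rule sum_mono) (rule norm_triangle_ineq4)

lemma vd_quot:
  fixes f :: "real \<Rightarrow> complex"
  shows "(f has_vector_derivative D) (at 0) \<longleftrightarrow> ((\<lambda>t. (f t - f 0) / of_real t) \<longlongrightarrow> D) (at 0)"
proof -
  have eq: "\<And>y. y \<noteq> 0 \<Longrightarrow> norm (f y - f 0 - y *\<^sub>R D) / \<bar>y\<bar> = norm ((f y - f 0) / of_real y - D)"
  proof -
    fix y :: real assume y: "y \<noteq> 0"
    have "(f y - f 0) / of_real y - D = (f y - f 0 - of_real y * D) / of_real y"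
      using y by (simp add: field_simps)
    then show "norm (f y - f 0 - y *\<^sub>R D) / \<bar>y\<bar> = norm ((f y - f 0) / of_real y - D)"
      by (simp add: norm_divide scaleR_conv_of_real)
  qed
  have "((\<lambda>y. norm (f y - f 0 - (y - 0) *\<^sub>R D) / norm (y - 0)) \<longlongrightarrow> 0) (at 0) \<longleftrightarrow>
        ((\<lambda>y. norm ((f y - f 0) / of_real y - D)) \<longlongrightarrow> 0) (at 0)"
    by (rule filterlim_cong[OF refl refl]) (simp add: eventually_at_filter eq always_eventually)
  also have "\<dots> \<longleftrightarrow> ((\<lambda>t. (f t - f 0) / of_real t) \<longlongrightarrow> D) (at 0)"
    by (simp add: tendsto_norm_zero_iff LIM_zero_iff)
  finally show ?thesis
    unfolding has_vector_derivative_def has_derivative_iff_norm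
    by (simp add: bounded_linear_scaleR_left)
qed

lemma tend_mul:
  assumes "\<forall>A. ((\<lambda>t. U t A) \<longlongrightarrow> U0 A) F" "\<forall>A. ((\<lambda>t. V t A) \<longlongrightarrow> V0 A) F"
  shows "((\<lambda>t. cl_mul p (U t) (V t) C) \<longlongrightarrow> cl_mul p U0 V0 C) F"
  unfolding cl_mul_alt using assms
  by (intro tendsto_sum tendsto_mult tendsto_const) auto

definition lined :: "((real, 'n::{finite,linorder}) vec \<Rightarrow> 'n cl) \<Rightarrow> (real, 'n) vec \<Rightarrow> 'n \<Rightarrow> 'n cl \<Rightarrow> bool" where
  "lined F x i D \<longleftrightarrow> (\<forall>A. ((\<lambda>t. F (x + t *\<^sub>R axis i 1) A) has_vector_derivative D A) (at 0))"

lemma lined_partial: "lined F x i D \<Longrightarrow> cl_partial i F x = D"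
  unfolding lined_def cl_partial_def partial_def
  by (auto intro!: ext vector_derivative_at)

lemma smooth_lined:
  assumes "cl_smooth F" shows "lined F x i (cl_partial i F x)"
  unfolding lined_def cl_partial_def partial_def
proof
  fix A
  have "smooth_fun (\<lambda>y. F y A)" using assms unfolding cl_smooth_def by blast
  then have "\<forall>i x. (\<lambda>t. iter_partial [] (\<lambda>y. F y A) (x + t *\<^sub>R axis i 1)) differentiable (at 0)"
    unfolding smooth_fun_def by blast
  then have "(\<lambda>t. F (x + t *\<^sub>R axis i 1) A) differentiable (at 0)" by simp
  then show "((\<lambda>t. F (x + t *\<^sub>R axis i 1) A) has_vector_derivative
      vector_derivative (\<lambda>t. F (x + t *\<^sub>R axis i 1) A) (at 0)) (at 0)"
    using vector_derivative_works by blast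
qed

lemma lined_scale: "lined F x i D \<Longrightarrow> lined (\<lambda>y. cl_scale c (F y)) x i (cl_scale c D)"
  unfolding lined_def cl_scale_def by (auto intro: has_vector_derivative_mult_right)

lemma lined_mul:
  assumes "lined F x i F'" "lined G x i G'"
  shows "lined (\<lambda>y. cl_mul p (F y) (G y)) x i (cl_add (cl_mul p (F x) G') (cl_mul p F' (G x)))"
  unfolding lined_def
proof
  fix C
  let ?L = "\<lambda>t. x + t *\<^sub>R axis i 1"
  have hf: "\<And>A. ((\<lambda>t. F (?L t) A) has_vector_derivative F' A) (at 0)"
    and hg: "\<And>A. ((\<lambda>t. G (?L t) A) has_vector_derivative G' A) (at 0)"
    using assms unfolding lined_def by auto
  have "((\<lambda>t. \<Sum>A\<in>UNIV. blade_sign p A (sd A C) * F (?L t) A * G (?L t) (sd A C)) has_vector_derivative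
     (\<Sum>A\<in>UNIV. blade_sign p A (sd A C) * F (?L 0) A * G' (sd A C) + blade_sign p A (sd A C) * F' A * G (?L 0) (sd A C))) (at 0)"
  proof (rule has_vector_derivative_sum)
    fix A
    show "((\<lambda>t. blade_sign p A (sd A C) * F (?L t) A * G (?L t) (sd A C)) has_vector_derivative
      blade_sign p A (sd A C) * F (?L 0) A * G' (sd A C) + blade_sign p A (sd A C) * F' A * G (?L 0) (sd A C)) (at 0)"
      using has_vector_derivative_mult[OF has_vector_derivative_mult_right[OF hf[of A], of "blade_sign p A (sd A C)"] hg[of "sd A C"]]
      .
  qed
  then show "((\<lambda>t. cl_mul p (F (?L t)) (G (?L t)) C) has_vector_derivative
      cl_add (cl_mul p (F x) G') (cl_mul p F' (G x)) C) (at 0)"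
    unfolding cl_mul_alt cl_add_def sum.distrib[symmetric] by simp
qed



lemma inv_key:
  assumes "cl_mul p (g t) (f t) = cl_one" "cl_mul p (f 0) (g 0) = cl_one"
  shows "cl_mul p (g t) (cl_mul p (cl_sub (f t) (f 0)) (g 0)) = cl_sub (g 0) (g t)"
proof -
  have "cl_mul p (g t) (cl_mul p (f t) (g 0)) = g 0" by (simp add: cl_mul_assoc[symmetric] assms(1))
  then show ?thesis by (simp add: cl_mul_sub_left cl_mul_sub_right assms(2))
qed

lemma inv_cont:
  fixes f g :: "real \<Rightarrow> 'n::{finite,linorder} cl"
  assumes fc: "\<forall>B. ((\<lambda>t. f t B) \<longlongrightarrow> f 0 B) (at 0)"
    and fg: "\<And>t. cl_mul p (f t) (g t) = cl_one" and gf: "\<And>t. cl_mul p (g t) (f t) = cl_one"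
  shows "((\<lambda>t. g t A) \<longlongrightarrow> g 0 A) (at 0)"
proof -
  define d where "d t = cl_sub (f t) (f 0)" for t
  define c where "c = nrm (g 0)"
  have c0: "0 \<le> c" unfolding c_def by (rule nrm_nonneg)
  have key: "\<And>t. cl_mul p (g t) (cl_mul p (d t) (g 0)) = cl_sub (g 0) (g t)"
    unfolding d_def by (rule inv_key[of p g _ f, OF gf fg])
  have dlim: "((\<lambda>t. nrm (d t)) \<longlongrightarrow> 0) (at 0)"
    unfolding nrm_def d_def cl_sub_def
    by (intro tendsto_null_sum tendsto_norm_zero) (use fc LIM_zero in auto)
  have pos: "0 < 1 / (2 * (c + 1))" using c0 by simp
  have ev: "eventually (\<lambda>t. nrm (d t) < 1 / (2 * (c + 1))) (at 0)"
    using order_tendstoD(2)[OF dlim pos] .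
  have bound: "eventually (\<lambda>t. norm (g t A - g 0 A) \<le> 2 * c * c * nrm (d t)) (at 0)"
    using ev
  proof eventually_elim
    fix t assume h: "nrm (d t) < 1 / (2 * (c + 1))"
    let ?M = "cl_mul p (g t) (cl_mul p (d t) (g 0))"
    have m: "nrm ?M \<le> nrm (g t) * (nrm (d t) * c)"
      using nrm_mul[of p "g t" "cl_mul p (d t) (g 0)"] nrm_mul[of p "d t" "g 0"]
        mult_left_mono[OF _ nrm_nonneg[of "g t"]] unfolding c_def by (meson order_trans)
    have gt: "g t = cl_sub (g 0) ?M" by (rule ext) (simp add: key cl_sub_def)
    have g1: "nrm (g t) \<le> c + nrm ?M" using nrm_sub[of "g 0" ?M] gt c_def by simp
    have dc: "nrm (d t) * c \<le> 1 / 2"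
    proof -
      have "nrm (d t) * c \<le> nrm (d t) * (c + 1)" using nrm_nonneg[of "d t"] by (simp add: mult_left_mono)
      also have "\<dots> \<le> 1 / (2 * (c + 1)) * (c + 1)" using h c0 by (intro mult_right_mono) auto
      also have "\<dots> = 1 / 2" using c0 by simp
      finally show ?thesis .
    qed
    have "nrm (g t) * (nrm (d t) * c) \<le> nrm (g t) * (1/2)"
      using mult_left_mono[OF dc nrm_nonneg[of "g t"]] .
    then have g2: "nrm (g t) \<le> 2 * c" using g1 m by linarith
    have "norm (g t A - g 0 A) = norm (?M A)"
      using key[of t] by (metis cl_sub_def norm_minus_commute)
    also have "\<dots> \<le> nrm ?M" by (rule coef_le_nrm)
    also have "\<dots> \<le> nrm (g t) * (nrm (d t) * c)" by (rule m)
    also have "\<dots> \<le> 2 * c * (nrm (d t) * c)"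
      using g2 nrm_nonneg[of "d t"] c0 by (intro mult_right_mono) auto
    finally show "norm (g t A - g 0 A) \<le> 2 * c * c * nrm (d t)" by (simp add: algebra_simps)
  qed
  have "((\<lambda>t. 2 * c * c * nrm (d t)) \<longlongrightarrow> 0) (at 0)"
    using tendsto_mult_right_zero[OF dlim] by simp
  then have "((\<lambda>t. g t A - g 0 A) \<longlongrightarrow> 0) (at 0)"
    by (rule Lim_null_comparison[OF bound])
  then show ?thesis by (rule LIM_zero_cancel)
qed

lemma inv_deriv:
  fixes f g :: "real \<Rightarrow> 'n::{finite,linorder} cl"
  assumes fd: "\<forall>B. ((\<lambda>t. f t B) has_vector_derivative D B) (at 0)"
    and fg: "\<And>t. cl_mul p (f t) (g t) = cl_one" and gf: "\<And>t. cl_mul p (g t) (f t) = cl_one"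
  shows "((\<lambda>t. g t A) has_vector_derivative cl_scale (-1) (cl_mul p (g 0) (cl_mul p D (g 0))) A) (at 0)"
proof -
  have fc: "\<forall>B. ((\<lambda>t. f t B) \<longlongrightarrow> f 0 B) (at 0)"
    using fd has_vector_derivative_continuous continuous_at by blast
  have gc: "\<forall>B. ((\<lambda>t. g t B) \<longlongrightarrow> g 0 B) (at 0)"
    using inv_cont[OF fc fg gf] by blast
  define q where "q t = cl_scale (inverse (of_real t)) (cl_sub (f t) (f 0))" for t
  have qlim: "\<forall>B. ((\<lambda>t. q t B) \<longlongrightarrow> D B) (at 0)"
  proof
    fix B
    have "((\<lambda>t. (f t B - f 0 B) / of_real t) \<longlongrightarrow> D B) (at 0)"
      using fd vd_quot[of "\<lambda>t. f t B" "D B"] by simp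
    moreover have "(\<lambda>t. (f t B - f 0 B) / of_real t) = (\<lambda>t. q t B)"
      by (rule ext) (simp add: q_def cl_scale_def cl_sub_def divide_inverse mult.commute)
    ultimately show "((\<lambda>t. q t B) \<longlongrightarrow> D B) (at 0)" by simp
  qed
  have c0: "\<forall>B. ((\<lambda>t. g 0 B) \<longlongrightarrow> g 0 B) (at 0)" by simp
  have inner: "\<forall>B. ((\<lambda>t. cl_mul p (q t) (g 0) B) \<longlongrightarrow> cl_mul p D (g 0) B) (at 0)"
    using tend_mul[OF qlim c0] by blast
  have "((\<lambda>t. cl_mul p (g t) (cl_mul p (q t) (g 0)) A) \<longlongrightarrow> cl_mul p (g 0) (cl_mul p D (g 0)) A) (at 0)"
    by (rule tend_mul[OF gc inner])
  then have lim: "((\<lambda>t. cl_scale (-1) (cl_mul p (g t) (cl_mul p (q t) (g 0))) A) \<longlongrightarrow>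
      cl_scale (-1) (cl_mul p (g 0) (cl_mul p D (g 0))) A) (at 0)"
    unfolding cl_scale_def by (intro tendsto_mult_left)
  have eqv: "eventually (\<lambda>t. cl_scale (-1) (cl_mul p (g t) (cl_mul p (q t) (g 0))) A = (g t A - g 0 A) / of_real t) (at 0)"
  proof -
    have "cl_scale (-1) (cl_mul p (g t) (cl_mul p (q t) (g 0))) A = (g t A - g 0 A) / of_real t" for t
    proof -
      have "cl_mul p (g t) (cl_mul p (q t) (g 0)) = cl_scale (inverse (of_real t)) (cl_sub (g 0) (g t))"
        unfolding q_def cl_mul_scale_left cl_mul_scale_right inv_key[of p g t f, OF gf fg] ..
      then show ?thesis by (simp add: cl_scale_def cl_sub_def divide_inverse algebra_simps)
    qed
    then show ?thesis by simp
  qed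
  have "((\<lambda>t. (g t A - g 0 A) / of_real t) \<longlongrightarrow> cl_scale (-1) (cl_mul p (g 0) (cl_mul p D (g 0))) A) (at 0)"
    by (rule Lim_transform_eventually[OF lim eqv])
  then show ?thesis using vd_quot by blast
qed



theorem theorem6:
  fixes p :: nat
    and h C :: "'n::{finite,linorder} \<Rightarrow> (real, 'n) vec \<Rightarrow> 'n cl"
    and S :: "(real, 'n) vec \<Rightarrow> 'n cl"
  assumes p_le: "p \<le> CARD('n)"
    and h_cfv: "clifford_field_vector p h"
    and h_smooth: "\<And>\<mu>. cl_smooth (h \<mu>)"
    and h_circ: "\<And>\<mu> x. h \<mu> x \<in> cl_circS"
    and C_smooth: "\<And>\<mu>. cl_smooth (C \<mu>)"
    and C_circ: "\<And>\<mu> x. C \<mu> x \<in> cl_circS"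
    and eq: "\<And>\<mu> \<rho> x. cl_sub (cl_partial \<mu> (lower p h \<rho>) x) (cl_comm p (C \<mu> x) (lower p h \<rho> x)) = cl_zero"
    and S_smooth: "cl_smooth S"
    and S_inv: "\<And>x. cl_invertible p (S x)"
    and S_circ: "\<And>\<mu> x. cl_mul p (cl_inv p (S x)) (cl_partial \<mu> S x) \<in> cl_circS"
  defines "h' \<equiv> \<lambda>\<rho> x. cl_mul p (cl_mul p (cl_inv p (S x)) (lower p h \<rho> x)) (S x)"
    and "C' \<equiv> \<lambda>\<mu> x. cl_sub (cl_mul p (cl_mul p (cl_inv p (S x)) (C \<mu> x)) (S x))
                    (cl_mul p (cl_inv p (S x)) (cl_partial \<mu> S x))"
  shows "(\<forall>\<rho> x. h' \<rho> x \<in> cl_circS) \<and> (\<forall>\<mu> x. C' \<mu> x \<in> cl_circS) \<and>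
         (\<forall>\<mu> \<rho> x. cl_sub (cl_partial \<mu> (h' \<rho>) x) (cl_comm p (C' \<mu> x) (h' \<rho> x)) = cl_zero)"
proof -
  define T where "T y = cl_inv p (S y)" for y
  have invs: "cl_mul p (S y) (T y) = cl_one \<and> cl_mul p (T y) (S y) = cl_one" for y
    using S_inv[of y] unfolding cl_invertible_def T_def cl_inv_def by (rule someI_ex)
  have ST: "\<And>y. cl_mul p (S y) (T y) = cl_one" and TS: "\<And>y. cl_mul p (T y) (S y) = cl_one"
    using invs by auto
  have low_circ: "lower p h \<rho> x \<in> cl_circS" for \<rho> x
    unfolding lower_def by (rule circS_scale[OF h_circ])
  have P1: "\<forall>\<rho> x. h' \<rho> x \<in> cl_circS"
    unfolding h'_def using circS_conj[OF ST low_circ] T_def by simp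
  have P2: "\<forall>\<mu> x. C' \<mu> x \<in> cl_circS"
    unfolding C'_def using circS_sub[OF circS_conj[OF ST C_circ] S_circ] T_def by simp
  have P3: "cl_sub (cl_partial \<mu> (h' \<rho>) x) (cl_comm p (C' \<mu> x) (h' \<rho> x)) = cl_zero" for \<mu> \<rho> x
  proof -
    let ?L = "\<lambda>t. x + t *\<^sub>R axis \<mu> (1::real)"
    define S' where "S' = cl_partial \<mu> S x"
    define H0 where "H0 = lower p h \<rho> x"
    define H' where "H' = cl_partial \<mu> (lower p h \<rho>) x"
    define K where "K = C \<mu> x"
    define T' where "T' = cl_scale (-1) (cl_mul p (T x) (cl_mul p S' (T x)))"
    have lS: "lined S x \<mu> S'" unfolding S'_def by (rule smooth_lined[OF S_smooth])
    have lT: "lined T x \<mu> T'"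
      unfolding lined_def
    proof
      fix A
      have "\<forall>B. ((\<lambda>t. S (?L t) B) has_vector_derivative S' B) (at 0)"
        using lS unfolding lined_def by blast
      from inv_deriv[OF this, of p "\<lambda>t. T (?L t)" A] ST TS
      show "((\<lambda>t. T (?L t) A) has_vector_derivative T' A) (at 0)"
        unfolding T'_def by simp
    qed
    have lowf: "lower p h \<rho> = (\<lambda>y. cl_scale (eta p \<rho>) (h \<rho> y))"
      by (rule ext) (simp add: lower_def)
    have lH0: "lined (lower p h \<rho>) x \<mu> (cl_scale (eta p \<rho>) (cl_partial \<mu> (h \<rho>) x))"
      unfolding lowf by (rule lined_scale[OF smooth_lined[OF h_smooth]])
    have lH: "lined (lower p h \<rho>) x \<mu> H'"
      using lH0 lined_partial[OF lH0] unfolding H'_def by simp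
    have hf: "h' \<rho> = (\<lambda>y. cl_mul p (cl_mul p (T y) (lower p h \<rho> y)) (S y))"
      unfolding h'_def T_def ..
    have lh: "lined (h' \<rho>) x \<mu> (cl_add (cl_mul p (cl_mul p (T x) H0) S')
          (cl_mul p (cl_add (cl_mul p (T x) H') (cl_mul p T' H0)) (S x)))"
      unfolding hf H0_def by (rule lined_mul[OF lined_mul[OF lT lH] lS])
    have dh: "cl_partial \<mu> (h' \<rho>) x = cl_add (cl_mul p (cl_mul p (T x) H0) S')
          (cl_mul p (cl_add (cl_mul p (T x) H') (cl_mul p T' H0)) (S x))"
      by (rule lined_partial[OF lh])
    have H'eq: "H' = cl_comm p K H0"
    proof
      fix A
      have "cl_sub H' (cl_comm p K H0) A = cl_zero A" unfolding H'_def K_def H0_def eq ..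
      then show "H' A = cl_comm p K H0 A" by (simp add: cl_sub_def cl_zero_def)
    qed
    have STX: "cl_mul p (S x) (cl_mul p (T x) X) = X" for X
      by (simp add: cl_mul_assoc[symmetric] ST)
    have C'x: "C' \<mu> x = cl_sub (cl_mul p (cl_mul p (T x) K) (S x)) (cl_mul p (T x) S')"
      unfolding C'_def T_def K_def S'_def ..
    have h'x: "h' \<rho> x = cl_mul p (cl_mul p (T x) H0) (S x)"
      unfolding h'_def T_def H0_def ..
    have "cl_partial \<mu> (h' \<rho>) x = cl_comm p (C' \<mu> x) (h' \<rho> x)"
      unfolding dh C'x h'x H'eq T'_def
      apply (simp add: cl_comm_def cl_mul_add_left cl_mul_add_right cl_mul_sub_left cl_mul_sub_right
          cl_mul_scale_left cl_mul_scale_right cl_mul_assoc STX)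
      apply (rule ext)
      apply (simp add: cl_add_def cl_sub_def cl_scale_def)
      done
    then show ?thesis by (simp add: cl_sub_def cl_zero_def)
  qed
  show ?thesis using P1 P2 P3 by blast
qed

end
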